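(* Let $d,K\in\mathbb{N}$, $\mathbb{T}^d=(\mathbb{R}/\mathbb{Z})^d$, $E:\mathbb{T}^d\to\mathbb{R}^d$ of class $\mathcal{C}^\infty$, and $\sigma_1,\ldots,\sigma_K:\mathbb{T}^d\times\mathbb{R}^d\to\mathbb{R}$ of class $\mathcal{C}^\infty$ with $\sigma_k\in L^2_{x,v}$ for all $k$. Let $f_0\in L^2_{x,v}$ be non-random and $\tau\in(0,1)$. Define $f_0^{\rm add}=f_0$ and, for $n\ge0$, $$f_{n+1}^{\rm add}=S^2(\tau)S^1(\tau)f_n^{\rm add}+\sum_{k=1}^K\delta\beta_{n,k}\,\sigma_k,$$ where $S^1(\tau)f(x,v)=f(x-\tau v,v)$, $S^2(\tau)f(x,v)=f(x,v-\tau E(x))$, and $\delta\beta_{n,k}=\beta_k(t_{n+1})-\beta_k(t_n)$ with $t_n=n\tau$. Then for every integer $n\ge0$, $f_n^{\rm add}\in L^2(\Omega,L^2_{x,v})$ and $$\mathbb{E}\big[\|f_n^{\rm add}\|_{L^2_{x,v}}^2\big]=\|f_0\|_{L^2_{x,v}}^2+t_n\sum_{k=1}^K\|\sigma_k\|_{L^2_{x,v}}^2.$$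
   Context: $\beta_1,\ldots,\beta_K$ are independent standard real-valued Wiener processes on a filtered probability space $(\Omega,\mathcal{F},\mathbb{P})$. $L^p_{x,v}$ denotes $L^p(\mathbb{T}^d\times\mathbb{R}^d)$ with respect to Lebesgue measure. *)

theory Defs
  imports "HOL-Analysis.Analysis" "HOL-Probability.Probability"
begin

fun iter_deriv :: "'a::real_normed_vector list \<Rightarrow> ('a \<Rightarrow> real) \<Rightarrow> 'a \<Rightarrow> real" where
  "iter_deriv [] f = f"
| "iter_deriv (u # us) f = (\<lambda>x. frechet_derivative (iter_deriv us f) (at x) u)"

definition smooth_fun :: "('a::real_normed_vector \<Rightarrow> real) \<Rightarrow> bool" where
  "smooth_fun f \<longleftrightarrow> (\<forall>us x. iter_deriv us f differentiable (at x))"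

section \<open>Torus T^d = (R/Z)^d, functions on T^d x R^d as Z^d-periodic functions in x\<close>

definition int_vec :: "real^'d \<Rightarrow> bool" where
  "int_vec z \<longleftrightarrow> (\<forall>i. z $ i \<in> \<int>)"

definition periodic_on_torus :: "(real^'d \<Rightarrow> 'b) \<Rightarrow> bool" where
  "periodic_on_torus E \<longleftrightarrow> (\<forall>x z. int_vec z \<longrightarrow> E (x + z) = E x)"

definition x_periodic :: "((real^'d) \<times> (real^'d) \<Rightarrow> 'b) \<Rightarrow> bool" where
  "x_periodic f \<longleftrightarrow> (\<forall>x v z. int_vec z \<longrightarrow> f (x + z, v) = f (x, v))"

text \<open>Fundamental cell [0,1)^d of the torus, and the phase-space domain T^d x R^d.\<close>
definition torus_cell :: "(real^'d) set" where
  "torus_cell = {x. \<forall>i. 0 \<le> x $ i \<and> x $ i < 1}"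

definition phase_dom :: "((real^'d) \<times> (real^'d)) set" where
  "phase_dom = torus_cell \<times> UNIV"

definition in_L2xv :: "((real^'d) \<times> (real^'d) \<Rightarrow> real) \<Rightarrow> bool" where
  "in_L2xv f \<longleftrightarrow> x_periodic f \<and> f \<in> borel_measurable lborel
      \<and> set_integrable lborel phase_dom (\<lambda>z. (f z)\<^sup>2)"

definition L2xv_norm :: "((real^'d) \<times> (real^'d) \<Rightarrow> real) \<Rightarrow> real" where
  "L2xv_norm f = sqrt (LINT z:phase_dom|lborel. (f z)\<^sup>2)"

definition S1 :: "real \<Rightarrow> ((real^'d) \<times> (real^'d) \<Rightarrow> real) \<Rightarrow> (real^'d) \<times> (real^'d) \<Rightarrow> real" where
  "S1 \<tau> f = (\<lambda>(x, v). f (x - \<tau> *\<^sub>R v, v))"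

definition S2 :: "(real^'d \<Rightarrow> real^'d) \<Rightarrow> real \<Rightarrow> ((real^'d) \<times> (real^'d) \<Rightarrow> real) \<Rightarrow> (real^'d) \<times> (real^'d) \<Rightarrow> real" where
  "S2 E \<tau> f = (\<lambda>(x, v). f (x, v - \<tau> *\<^sub>R E x))"

text \<open>The additive-noise splitting scheme; Wiener processes indexed 0..K-1, t_n = n tau.\<close>
primrec f_add ::
  "(real^'d \<Rightarrow> real^'d) \<Rightarrow> (nat \<Rightarrow> (real^'d) \<times> (real^'d) \<Rightarrow> real) \<Rightarrow> nat
   \<Rightarrow> (nat \<Rightarrow> real \<Rightarrow> 'w \<Rightarrow> real) \<Rightarrow> real \<Rightarrow> ((real^'d) \<times> (real^'d) \<Rightarrow> real)
   \<Rightarrow> nat \<Rightarrow> 'w \<Rightarrow> (real^'d) \<times> (real^'d) \<Rightarrow> real" where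
  "f_add E \<sigma> K \<beta> \<tau> f0 0 = (\<lambda>\<omega>. f0)"
| "f_add E \<sigma> K \<beta> \<tau> f0 (Suc n) = (\<lambda>\<omega> z.
      S2 E \<tau> (S1 \<tau> (f_add E \<sigma> K \<beta> \<tau> f0 n \<omega>)) z
      + (\<Sum>k<K. (\<beta> k (real (Suc n) * \<tau>) \<omega> - \<beta> k (real n * \<tau>) \<omega>) * \<sigma> k z))"

definition wiener_family ::
  "'w measure \<Rightarrow> (real \<Rightarrow> 'w set set) \<Rightarrow> nat \<Rightarrow> (nat \<Rightarrow> real \<Rightarrow> 'w \<Rightarrow> real) \<Rightarrow> bool" where
  "wiener_family M F K \<beta> \<longleftrightarrow>
     prob_space M
   \<and> (\<forall>t. F t \<subseteq> sets M \<and> sigma_algebra (space M) (F t))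
   \<and> (\<forall>s t. s \<le> t \<longrightarrow> F s \<subseteq> F t)
   \<and> (\<forall>k<K. \<forall>t\<ge>0. \<forall>A\<in>sets borel. \<beta> k t -` A \<inter> space M \<in> F t)
   \<and> (\<forall>k<K. AE \<omega> in M. \<beta> k 0 \<omega> = 0)
   \<and> (\<forall>k<K. AE \<omega> in M. continuous_on {0..} (\<lambda>t. \<beta> k t \<omega>))
   \<and> (\<forall>k<K. \<forall>s t. 0 \<le> s \<and> s < t \<longrightarrow>
        distributed M lborel (\<lambda>\<omega>. \<beta> k t \<omega> - \<beta> k s \<omega>) (normal_density 0 (sqrt (t - s))))
   \<and> (\<forall>s t. 0 \<le> s \<and> s < t \<longrightarrow>
        prob_space.indep_sets M
          (\<lambda>i. case i of None \<Rightarrow> F s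
                | Some k \<Rightarrow> {(\<lambda>\<omega>. \<beta> k t \<omega> - \<beta> k s \<omega>) -` A \<inter> space M | A. A \<in> sets borel})
          (insert None (Some ` {..<K})))"

end

theory Submission
  imports Defs
begin

lemma nn_translate:
  fixes F :: "'a::euclidean_space \<Rightarrow> ennreal"
  assumes [measurable]: "F \<in> borel_measurable borel"
  shows "(\<integral>\<^sup>+x. F (x + a) \<partial>lborel) = (\<integral>\<^sup>+x. F x \<partial>lborel)"
proof -
  have "(\<integral>\<^sup>+x. F x \<partial>lborel) = (\<integral>\<^sup>+x. F x \<partial>(distr lborel borel ((+) a)))"
    by (simp add: lborel_distr_plus)
  also have "\<dots> = (\<integral>\<^sup>+x. F (a + x) \<partial>lborel)"
    by (subst nn_integral_distr) auto
  finally show ?thesis by (simp add: add.commute)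
qed

lemma axis_int_vec: "int_vec (of_int m *\<^sub>R axis i (1::real))"
  unfolding int_vec_def by (auto simp: axis_def)

lemma shift_one:
  fixes g :: "real^'d \<Rightarrow> ennreal"
  assumes gm[measurable]: "g \<in> borel_measurable borel"
    and per: "\<And>x z. int_vec z \<Longrightarrow> g (x + z) = g x"
    and c: "0 \<le> c" "c < 1"
  shows "(\<integral>\<^sup>+x. indicator torus_cell x * g (x + c *\<^sub>R axis i 1) \<partial>lborel)
       = (\<integral>\<^sup>+x. indicator torus_cell x * g x \<partial>lborel)"
proof -
  define e where "e = (axis i 1 :: real^'d)"
  define C1 where "C1 = {y::real^'d. y \<in> torus_cell \<and> c \<le> y $ i}"
  define C2 where "C2 = {y::real^'d. y \<in> torus_cell \<and> y $ i < c}"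
  have tc: "torus_cell = {x::real^'d. \<forall>i. 0 \<le> x $ i \<and> x $ i < 1}" by (simp add: torus_cell_def)
  have mtc[measurable]: "torus_cell \<in> sets (borel :: (real^'d) measure)"
  proof -
    have "torus_cell = (\<Inter>j. {x::real^'d. 0 \<le> x $ j} \<inter> {x. x $ j < 1})" by (auto simp: tc)
    also have "\<dots> \<in> sets borel" by measurable
    finally show ?thesis .
  qed
  have mC1[measurable]: "C1 \<in> sets borel" unfolding C1_def by measurable
  have mC2[measurable]: "C2 \<in> sets borel" unfolding C2_def by measurable
  have split_all: "\<And>Q. (\<forall>j. Q j) \<longleftrightarrow> Q i \<and> (\<forall>j. j \<noteq> i \<longrightarrow> Q j)" by auto
  have comp: "(y - a *\<^sub>R e) $ j = y $ j - (if j = i then a else 0)" for y a j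
    by (simp add: e_def axis_def)
  have m0: "y - c *\<^sub>R e \<in> torus_cell \<longleftrightarrow> (\<forall>j. j \<noteq> i \<longrightarrow> 0 \<le> y$j \<and> y$j < 1) \<and> c \<le> y$i \<and> y$i < 1 + c" for y
    unfolding tc mem_Collect_eq comp by (subst split_all) auto
  have m2: "y - e \<in> C2 \<longleftrightarrow> (\<forall>j. j \<noteq> i \<longrightarrow> 0 \<le> y$j \<and> y$j < 1) \<and> 1 \<le> y$i \<and> y$i < 1 + c" for y
    using comp[of y 1] c unfolding C2_def tc mem_Collect_eq by (subst split_all) auto
  have m1: "y \<in> C1 \<longleftrightarrow> (\<forall>j. j \<noteq> i \<longrightarrow> 0 \<le> y$j \<and> y$j < 1) \<and> c \<le> y$i \<and> y$i < 1" for y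
    using c unfolding C1_def tc mem_Collect_eq by (subst split_all) auto
  have ptw: "indicator torus_cell (y - c *\<^sub>R e) = (indicator C1 y + indicator C2 (y - e) :: ennreal)" for y
  proof (cases "y - c *\<^sub>R e \<in> torus_cell")
    case True
    then show ?thesis unfolding indicator_def using m0[of y] m1[of y] m2[of y] by auto
  next
    case False
    then show ?thesis unfolding indicator_def using m0[of y] m1[of y] m2[of y] c by auto
  qed
  have ptw2: "indicator C1 y + indicator C2 y = (indicator torus_cell y :: ennreal)" for y
    unfolding C1_def C2_def indicator_def by auto
  have "(\<integral>\<^sup>+x. indicator torus_cell x * g (x + c *\<^sub>R e) \<partial>lborel)
      = (\<integral>\<^sup>+y. indicator torus_cell (y - c *\<^sub>R e) * g y \<partial>lborel)"
    using nn_translate[of "\<lambda>y. indicator torus_cell (y - c *\<^sub>R e) * g y" "c *\<^sub>R e"] by simp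
  also have "\<dots> = (\<integral>\<^sup>+y. indicator C1 y * g y + indicator C2 (y - e) * g y \<partial>lborel)"
    by (simp add: ptw distrib_right)
  also have "\<dots> = (\<integral>\<^sup>+y. indicator C1 y * g y \<partial>lborel) + (\<integral>\<^sup>+y. indicator C2 (y - e) * g y \<partial>lborel)"
    by (rule nn_integral_add) auto
  also have "(\<integral>\<^sup>+y. indicator C2 (y - e) * g y \<partial>lborel) = (\<integral>\<^sup>+y. indicator C2 y * g (y + e) \<partial>lborel)"
    using nn_translate[of "\<lambda>y. indicator C2 (y - e) * g y" "e"] by simp
  also have "\<dots> = (\<integral>\<^sup>+y. indicator C2 y * g y \<partial>lborel)"
    using per[of e] axis_int_vec[of 1 i] by (simp add: e_def)
  also have "(\<integral>\<^sup>+y. indicator C1 y * g y \<partial>lborel) + \<dots> = (\<integral>\<^sup>+y. indicator C1 y * g y + indicator C2 y * g y \<partial>lborel)"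
    by (rule nn_integral_add[symmetric]) auto
  also have "\<dots> = (\<integral>\<^sup>+x. indicator torus_cell x * g x \<partial>lborel)"
    by (simp add: distrib_right[symmetric] ptw2)
  finally show ?thesis by (simp add: e_def)
qed

lemma shift_coord:
  fixes g :: "real^'d \<Rightarrow> ennreal"
  assumes gm[measurable]: "g \<in> borel_measurable borel"
    and per: "\<And>x z. int_vec z \<Longrightarrow> g (x + z) = g x"
  shows "(\<integral>\<^sup>+x. indicator torus_cell x * g (x + c *\<^sub>R axis i 1) \<partial>lborel)
       = (\<integral>\<^sup>+x. indicator torus_cell x * g x \<partial>lborel)"
proof -
  have cs: "c = frac c + of_int (floor c)" by (simp add: frac_def)
  have "g (x + c *\<^sub>R axis i 1) = g (x + frac c *\<^sub>R axis i 1)" for x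
  proof -
    have "x + c *\<^sub>R axis i 1 = (x + frac c *\<^sub>R axis i 1) + of_int (floor c) *\<^sub>R axis i 1"
      by (subst cs) (simp add: scaleR_add_left algebra_simps)
    then show ?thesis using per[OF axis_int_vec, of "x + frac c *\<^sub>R axis i 1" "floor c" i] by (simp add: add.assoc)
  qed
  then have "(\<integral>\<^sup>+x. indicator torus_cell x * g (x + c *\<^sub>R axis i 1) \<partial>lborel)
     = (\<integral>\<^sup>+x. indicator torus_cell x * g (x + frac c *\<^sub>R axis i 1) \<partial>lborel)" by simp
  also have "\<dots> = (\<integral>\<^sup>+x. indicator torus_cell x * g x \<partial>lborel)"
    by (rule shift_one[OF gm per]) (auto simp: frac_lt_1)
  finally show ?thesis .
qed

lemma shift_any:
  fixes g :: "real^'d \<Rightarrow> ennreal"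
  assumes gm: "g \<in> borel_measurable borel"
    and per: "\<And>x z. int_vec z \<Longrightarrow> g (x + z) = g x"
  shows "(\<integral>\<^sup>+x. indicator torus_cell x * g (x + a) \<partial>lborel)
       = (\<integral>\<^sup>+x. indicator torus_cell x * g x \<partial>lborel)"
proof -
  have main: "\<And>g. g \<in> borel_measurable borel \<Longrightarrow> (\<And>x z. int_vec z \<Longrightarrow> g (x + z) = g x) \<Longrightarrow>
    (\<integral>\<^sup>+x. indicator torus_cell x * g (x + (\<Sum>j\<in>S. a$j *\<^sub>R axis j 1)) \<partial>lborel)
       = (\<integral>\<^sup>+x. indicator torus_cell x * g x \<partial>lborel)" if "finite S" for S
    using that
  proof (induction S rule: finite_induct)
    case empty
    then show ?case by simp
  next
    case (insert j S)
    define g' where "g' = (\<lambda>x. g (x + (\<Sum>j\<in>S. a$j *\<^sub>R axis j 1)))"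
    have g'm: "g' \<in> borel_measurable borel" unfolding g'_def using insert(4) by measurable
    have g'p: "g' (x + z) = g' x" if "int_vec z" for x z
      unfolding g'_def using insert(5)[OF that, of "x + (\<Sum>j\<in>S. a$j *\<^sub>R axis j 1)"]
      by (simp add: algebra_simps)
    have "(\<integral>\<^sup>+x. indicator torus_cell x * g (x + (\<Sum>j\<in>insert j S. a$j *\<^sub>R axis j 1)) \<partial>lborel)
        = (\<integral>\<^sup>+x. indicator torus_cell x * g' (x + a$j *\<^sub>R axis j 1) \<partial>lborel)"
      using insert(1,2) by (simp add: g'_def algebra_simps)
    also have "\<dots> = (\<integral>\<^sup>+x. indicator torus_cell x * g' x \<partial>lborel)"
      by (rule shift_coord[OF g'm g'p])
    also have "\<dots> = (\<integral>\<^sup>+x. indicator torus_cell x * g x \<partial>lborel)"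
      unfolding g'_def by (rule insert(3)[OF insert(4,5)])
    finally show ?case .
  qed
  have "a = (\<Sum>j\<in>UNIV. a$j *\<^sub>R axis j 1)"
    using basis_expansion[of a] by (simp add: scalar_mult_eq_scaleR)
  then have "(\<integral>\<^sup>+x. indicator torus_cell x * g (x + a) \<partial>lborel) = (\<integral>\<^sup>+x. indicator torus_cell x * g (x + (\<Sum>j\<in>UNIV. a $ j *\<^sub>R axis j 1)) \<partial>lborel)"
    by simp
  also have "\<dots> = (\<integral>\<^sup>+x. indicator torus_cell x * g x \<partial>lborel)"
    by (rule main[OF finite gm per])
  finally show ?thesis .
qed

lemma S1_pres:
  fixes h :: "(real^'d) \<times> (real^'d) \<Rightarrow> ennreal"
  assumes hm[measurable]: "h \<in> borel_measurable borel"
    and per: "x_periodic h"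
  shows "(\<integral>\<^sup>+z. indicator phase_dom z * h (fst z - t *\<^sub>R snd z, snd z) \<partial>lborel)
       = (\<integral>\<^sup>+z. indicator phase_dom z * h z \<partial>lborel)"
proof -
  have mtc[measurable]: "torus_cell \<in> sets (borel :: (real^'d) measure)"
  proof -
    have "torus_cell = (\<Inter>j. {x::real^'d. 0 \<le> x $ j} \<inter> {x. x $ j < 1})" by (auto simp: torus_cell_def)
    also have "\<dots> \<in> sets borel" by measurable
    finally show ?thesis .
  qed
  have ind: "indicator phase_dom (x, v) = (indicator torus_cell x :: ennreal)" for x v :: "real^'d"
    by (simp add: phase_dom_def indicator_def)
  have ind2: "indicator (torus_cell \<times> UNIV) (x, v) = (indicator torus_cell x :: ennreal)" for x v :: "real^'d"
    by (simp add: indicator_def)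
  have hm2[measurable]: "h \<in> borel_measurable (lborel \<Otimes>\<^sub>M lborel)"
    using hm by (simp add: lborel_prod)
  have "(\<integral>\<^sup>+z. indicator phase_dom z * h (fst z - t *\<^sub>R snd z, snd z) \<partial>lborel)
      = (\<integral>\<^sup>+z. indicator phase_dom z * h (fst z - t *\<^sub>R snd z, snd z) \<partial>(lborel \<Otimes>\<^sub>M lborel))"
    by (simp add: lborel_prod)
  also have "\<dots> = (\<integral>\<^sup>+v. \<integral>\<^sup>+x. indicator torus_cell x * h (x - t *\<^sub>R v, v) \<partial>lborel \<partial>lborel)"
    by (subst lborel_pair.nn_integral_snd[symmetric]) (auto simp: ind2 phase_dom_def)
  also have "\<dots> = (\<integral>\<^sup>+v. \<integral>\<^sup>+x. indicator torus_cell x * h (x, v) \<partial>lborel \<partial>lborel)"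
  proof (rule nn_integral_cong)
    fix v :: "real^'d"
    have "(\<integral>\<^sup>+x. indicator torus_cell x * h (x + (- t *\<^sub>R v), v) \<partial>lborel) = (\<integral>\<^sup>+x. indicator torus_cell x * h (x, v) \<partial>lborel)"
      by (rule shift_any[where g="\<lambda>x. h (x, v)"]) (use per in \<open>auto simp: x_periodic_def\<close>)
    then show "(\<integral>\<^sup>+x. indicator torus_cell x * h (x - t *\<^sub>R v, v) \<partial>lborel) = (\<integral>\<^sup>+x. indicator torus_cell x * h (x, v) \<partial>lborel)"
      by simp
  qed
  also have "\<dots> = (\<integral>\<^sup>+z. indicator phase_dom z * h z \<partial>(lborel \<Otimes>\<^sub>M lborel))"
    by (subst lborel_pair.nn_integral_snd[symmetric]) (auto simp: ind2 phase_dom_def)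
  also have "\<dots> = (\<integral>\<^sup>+z. indicator phase_dom z * h z \<partial>lborel)"
    by (simp add: lborel_prod)
  finally show ?thesis .
qed

lemma S2_pres:
  fixes h :: "(real^'d) \<times> (real^'d) \<Rightarrow> ennreal" and E :: "real^'d \<Rightarrow> real^'d"
  assumes hm[measurable]: "h \<in> borel_measurable borel"
    and Em[measurable]: "E \<in> borel_measurable borel"
  shows "(\<integral>\<^sup>+z. indicator phase_dom z * h (fst z, snd z - t *\<^sub>R E (fst z)) \<partial>lborel)
       = (\<integral>\<^sup>+z. indicator phase_dom z * h z \<partial>lborel)"
proof -
  have mtc[measurable]: "torus_cell \<in> sets (borel :: (real^'d) measure)"
  proof -
    have "torus_cell = (\<Inter>j. {x::real^'d. 0 \<le> x $ j} \<inter> {x. x $ j < 1})" by (auto simp: torus_cell_def)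
    also have "\<dots> \<in> sets borel" by measurable
    finally show ?thesis .
  qed
  have ind: "indicator phase_dom (x, v) = (indicator torus_cell x :: ennreal)" for x v :: "real^'d"
    by (simp add: phase_dom_def indicator_def)
  have ind2: "indicator (torus_cell \<times> UNIV) (x, v) = (indicator torus_cell x :: ennreal)" for x v :: "real^'d"
    by (simp add: indicator_def)
  have hm2[measurable]: "h \<in> borel_measurable (lborel \<Otimes>\<^sub>M lborel)"
    using hm by (simp add: lborel_prod)
  have "(\<integral>\<^sup>+z. indicator phase_dom z * h (fst z, snd z - t *\<^sub>R E (fst z)) \<partial>lborel)
      = (\<integral>\<^sup>+z. indicator phase_dom z * h (fst z, snd z - t *\<^sub>R E (fst z)) \<partial>(lborel \<Otimes>\<^sub>M lborel))"
    by (simp add: lborel_prod)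
  also have "\<dots> = (\<integral>\<^sup>+x. \<integral>\<^sup>+v. indicator torus_cell x * h (x, v - t *\<^sub>R E x) \<partial>lborel \<partial>lborel)"
    by (subst lborel.nn_integral_fst[symmetric]) (auto simp: ind2 phase_dom_def)
  also have "\<dots> = (\<integral>\<^sup>+x. \<integral>\<^sup>+v. indicator torus_cell x * h (x, v) \<partial>lborel \<partial>lborel)"
  proof (rule nn_integral_cong)
    fix x :: "real^'d"
    have "(\<integral>\<^sup>+v. indicator torus_cell x * h (x, v + (- t *\<^sub>R E x)) \<partial>lborel) = (\<integral>\<^sup>+v. indicator torus_cell x * h (x, v) \<partial>lborel)"
      by (rule nn_translate[where F="\<lambda>v. indicator torus_cell x * h (x, v)"]) measurable
    then show "(\<integral>\<^sup>+v. indicator torus_cell x * h (x, v - t *\<^sub>R E x) \<partial>lborel) = (\<integral>\<^sup>+v. indicator torus_cell x * h (x, v) \<partial>lborel)"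
      by simp
  qed
  also have "\<dots> = (\<integral>\<^sup>+z. indicator phase_dom z * h z \<partial>(lborel \<Otimes>\<^sub>M lborel))"
    by (subst lborel.nn_integral_fst[symmetric]) (auto simp: ind2 phase_dom_def)
  also have "\<dots> = (\<integral>\<^sup>+z. indicator phase_dom z * h z \<partial>lborel)"
    by (simp add: lborel_prod)
  finally show ?thesis .
qed

lemma fst_borel_meas[measurable]: "fst \<in> borel_measurable (borel :: ('a::euclidean_space \<times> 'b::euclidean_space) measure)"
  by (intro borel_measurable_continuous_onI continuous_on_fst continuous_on_id)

lemma snd_borel_meas[measurable]: "snd \<in> borel_measurable (borel :: ('a::euclidean_space \<times> 'b::euclidean_space) measure)"
  by (intro borel_measurable_continuous_onI continuous_on_snd continuous_on_id)

lemma torus_cell_borel[measurable]: "torus_cell \<in> sets (borel :: (real^'d) measure)"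
proof -
  have "torus_cell = (\<Inter>j. {x::real^'d. 0 \<le> x $ j} \<inter> {x. x $ j < 1})" by (auto simp: torus_cell_def)
  also have "\<dots> \<in> sets borel" by measurable
  finally show ?thesis .
qed

lemma phase_dom_borel[measurable]: "phase_dom \<in> sets (borel :: ((real^'d) \<times> (real^'d)) measure)"
proof -
  have "phase_dom = {z::(real^'d) \<times> (real^'d). fst z \<in> torus_cell}" by (auto simp: phase_dom_def)
  also have "\<dots> \<in> sets borel" by measurable
  finally show ?thesis .
qed

definition Phi :: "(real^'d \<Rightarrow> real^'d) \<Rightarrow> real \<Rightarrow> (real^'d) \<times> (real^'d) \<Rightarrow> (real^'d) \<times> (real^'d)" where
  "Phi E t z = (fst z - t *\<^sub>R (snd z - t *\<^sub>R E (fst z)), snd z - t *\<^sub>R E (fst z))"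

lemma T_eq: "S2 E t (S1 t f) z = f (Phi E t z)"
  by (cases z) (simp add: S1_def S2_def Phi_def)

lemma Phi_meas[measurable]:
  assumes [measurable]: "E \<in> borel_measurable borel"
  shows "Phi E t \<in> borel_measurable borel"
proof -
  have "Phi E t \<in> borel \<rightarrow>\<^sub>M (borel \<Otimes>\<^sub>M borel)"
    unfolding Phi_def by measurable
  then show ?thesis by (simp add: borel_prod)
qed

lemma T_pres_nn:
  fixes h :: "(real^'d) \<times> (real^'d) \<Rightarrow> ennreal" and E :: "real^'d \<Rightarrow> real^'d"
  assumes hm[measurable]: "h \<in> borel_measurable borel"
    and per: "x_periodic h"
    and Em[measurable]: "E \<in> borel_measurable borel"
  shows "(\<integral>\<^sup>+z. indicator phase_dom z * h (Phi E t z) \<partial>lborel)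
       = (\<integral>\<^sup>+z. indicator phase_dom z * h z \<partial>lborel)"
proof -
  define h' where "h' = (\<lambda>z. h (fst z - t *\<^sub>R snd z, snd z))"
  have h'm: "h' \<in> borel_measurable borel" unfolding h'_def by measurable
  have "(\<integral>\<^sup>+z. indicator phase_dom z * h (Phi E t z) \<partial>lborel)
     = (\<integral>\<^sup>+z. indicator phase_dom z * h' (fst z, snd z - t *\<^sub>R E (fst z)) \<partial>lborel)"
    by (simp add: h'_def Phi_def)
  also have "\<dots> = (\<integral>\<^sup>+z. indicator phase_dom z * h' z \<partial>lborel)"
    by (rule S2_pres[OF h'm Em])
  also have "\<dots> = (\<integral>\<^sup>+z. indicator phase_dom z * h z \<partial>lborel)"
    unfolding h'_def by (rule S1_pres[OF hm per])
  finally show ?thesis .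
qed

lemma ennreal_ind_mult: "ennreal (indicator A x * (y::real)) = indicator A x * ennreal y"
  by (simp add: indicator_def)

lemma ennreal_ind_norm:
  "0 \<le> y \<Longrightarrow> ennreal (norm (indicator A x *\<^sub>R (y::real))) = indicator A x * ennreal y"
  by (simp add: indicator_def)

lemma sq_nn:
  fixes f :: "(real^'d) \<times> (real^'d) \<Rightarrow> real"
  assumes [measurable]: "f \<in> borel_measurable borel"
  shows "set_integrable lborel phase_dom (\<lambda>z. (f z)\<^sup>2) \<longleftrightarrow>
    (\<integral>\<^sup>+z. indicator phase_dom z * ennreal ((f z)\<^sup>2) \<partial>lborel) < \<infinity>"
  unfolding set_integrable_def integrable_iff_bounded
  by (simp add: ennreal_ind_mult)

lemma sq_int:
  fixes f :: "(real^'d) \<times> (real^'d) \<Rightarrow> real"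
  assumes [measurable]: "f \<in> borel_measurable borel"
  shows "(LINT z:phase_dom|lborel. (f z)\<^sup>2) =
    enn2real (\<integral>\<^sup>+z. indicator phase_dom z * ennreal ((f z)\<^sup>2) \<partial>lborel)"
  unfolding set_lebesgue_integral_def
  by (subst integral_eq_nn_integral) (auto intro!: arg_cong[where f=enn2real] nn_integral_cong simp: indicator_def)

lemma L2_T:
  fixes f :: "(real^'d) \<times> (real^'d) \<Rightarrow> real" and E :: "real^'d \<Rightarrow> real^'d"
  assumes f: "in_L2xv f" and Ep: "periodic_on_torus E" and Em[measurable]: "E \<in> borel_measurable borel"
  shows "in_L2xv (S2 E t (S1 t f))"
    and "(LINT z:phase_dom|lborel. (S2 E t (S1 t f) z)\<^sup>2) = (LINT z:phase_dom|lborel. (f z)\<^sup>2)"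
proof -
  have fm[measurable]: "f \<in> borel_measurable borel" using f by (simp add: in_L2xv_def)
  have fp: "x_periodic f" using f by (simp add: in_L2xv_def)
  have Teq: "S2 E t (S1 t f) = (\<lambda>z. f (Phi E t z))" by (rule ext) (rule T_eq)
  have hper: "x_periodic (\<lambda>z. ennreal ((f z)\<^sup>2))" using fp by (simp add: x_periodic_def)
  have nn: "(\<integral>\<^sup>+z. indicator phase_dom z * ennreal ((f (Phi E t z))\<^sup>2) \<partial>lborel)
       = (\<integral>\<^sup>+z. indicator phase_dom z * ennreal ((f z)\<^sup>2) \<partial>lborel)"
    using T_pres_nn[OF _ hper Em, of t] by simp
  have Tper: "x_periodic (\<lambda>z. f (Phi E t z))"
    unfolding x_periodic_def
  proof (intro allI impI)
    fix x v z :: "real^'d" assume z: "int_vec z"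
    have "E (x + z) = E x" using Ep z by (simp add: periodic_on_torus_def)
    then have "Phi E t (x + z, v) = (fst (Phi E t (x, v)) + z, snd (Phi E t (x, v)))"
      by (simp add: Phi_def algebra_simps)
    then show "f (Phi E t (x + z, v)) = f (Phi E t (x, v))"
      using fp z by (simp add: x_periodic_def)
  qed
  have Tm: "(\<lambda>z. f (Phi E t z)) \<in> borel_measurable borel" by measurable
  have "set_integrable lborel phase_dom (\<lambda>z. (f z)\<^sup>2)" using f by (simp add: in_L2xv_def)
  then have "set_integrable lborel phase_dom (\<lambda>z. (f (Phi E t z))\<^sup>2)"
    using sq_nn[OF fm] sq_nn[OF Tm] nn by simp
  then show "in_L2xv (S2 E t (S1 t f))"
    unfolding Teq in_L2xv_def using Tper Tm by simp
  show "(LINT z:phase_dom|lborel. (S2 E t (S1 t f) z)\<^sup>2) = (LINT z:phase_dom|lborel. (f z)\<^sup>2)"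
    unfolding Teq using sq_int[OF fm] sq_int[OF Tm] nn by simp
qed

lemma L2_meas: "in_L2xv f \<Longrightarrow> f \<in> borel_measurable borel"
  by (simp add: in_L2xv_def)

lemma L2_int: "in_L2xv f \<Longrightarrow> integrable lborel (\<lambda>z. indicator phase_dom z * (f z)\<^sup>2)"
  by (simp add: in_L2xv_def set_integrable_def)

lemma abs_prod_le: "\<bar>(a::real) * b\<bar> \<le> a\<^sup>2 + b\<^sup>2"
proof -
  have "0 \<le> (\<bar>a\<bar> - \<bar>b\<bar>)\<^sup>2" by simp
  then have "2 * \<bar>a\<bar> * \<bar>b\<bar> \<le> a\<^sup>2 + b\<^sup>2" by (simp add: power2_eq_square algebra_simps)
  moreover have "\<bar>a\<bar> * \<bar>b\<bar> \<ge> 0" by simp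
  ultimately show ?thesis unfolding abs_mult by linarith
qed

lemma L2_prod:
  assumes f: "in_L2xv f" and g: "in_L2xv g"
  shows "integrable lborel (\<lambda>z. indicator phase_dom z * (f z * g z))"
proof (rule Bochner_Integration.integrable_bound)
  show "integrable lborel (\<lambda>z. indicator phase_dom z * (f z)\<^sup>2 + indicator phase_dom z * (g z)\<^sup>2)"
    using L2_int[OF f] L2_int[OF g] by simp
  have [measurable]: "f \<in> borel_measurable borel" "g \<in> borel_measurable borel"
    using f g by (auto simp: in_L2xv_def)
  show "(\<lambda>z. indicator phase_dom z * (f z * g z)) \<in> borel_measurable lborel" by simp
  show "AE z in lborel. norm (indicator phase_dom z * (f z * g z))
      \<le> norm (indicator phase_dom z * (f z)\<^sup>2 + indicator phase_dom z * (g z)\<^sup>2)"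
  proof (rule AE_I2)
    fix z
    have "\<bar>f z * g z\<bar> \<le> (f z)\<^sup>2 + (g z)\<^sup>2"
      by (rule abs_prod_le)
    then show "norm (indicator phase_dom z * (f z * g z))
      \<le> norm (indicator phase_dom z * (f z)\<^sup>2 + indicator phase_dom z * (g z)\<^sup>2)"
      by (simp add: indicator_def)
  qed
qed


lemma L2_add:
  assumes f: "in_L2xv f" and g: "in_L2xv g"
  shows "in_L2xv (\<lambda>z. f z + g z)"
proof -
  have [measurable]: "f \<in> borel_measurable borel" "g \<in> borel_measurable borel"
    using f g by (auto simp: in_L2xv_def)
  have "integrable lborel (\<lambda>z. indicator phase_dom z * (f z)\<^sup>2 + 2 * (indicator phase_dom z * (f z * g z)) + indicator phase_dom z * (g z)\<^sup>2)"
    using L2_int[OF f] L2_int[OF g] L2_prod[OF f g] by simp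
  moreover have "(\<lambda>z. indicator phase_dom z * (f z)\<^sup>2 + 2 * (indicator phase_dom z * (f z * g z)) + indicator phase_dom z * (g z)\<^sup>2)
     = (\<lambda>z. indicator phase_dom z *\<^sub>R (f z + g z)\<^sup>2)"
    by (rule ext) (simp add: power2_sum algebra_simps)
  ultimately show ?thesis using f g by (simp add: in_L2xv_def x_periodic_def set_integrable_def)
qed

lemma L2_scale:
  assumes f: "in_L2xv f"
  shows "in_L2xv (\<lambda>z. c * f z)"
proof -
  have [measurable]: "f \<in> borel_measurable borel"
    using f by (auto simp: in_L2xv_def)
  have "integrable lborel (\<lambda>z. c\<^sup>2 * (indicator phase_dom z * (f z)\<^sup>2))"
    using L2_int[OF f] by simp
  moreover have "(\<lambda>z. c\<^sup>2 * (indicator phase_dom z * (f z)\<^sup>2)) = (\<lambda>z. indicator phase_dom z *\<^sub>R (c * f z)\<^sup>2)"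
    by (rule ext) (simp add: power_mult_distrib)
  ultimately show ?thesis using f by (simp add: in_L2xv_def x_periodic_def set_integrable_def)
qed

lemma L2_zero: "in_L2xv (\<lambda>z. 0)"
  by (simp add: in_L2xv_def x_periodic_def set_integrable_def)

lemma L2_sum:
  fixes K :: nat and \<sigma> :: "nat \<Rightarrow> (real^'d) \<times> (real^'d) \<Rightarrow> real"
  assumes "\<forall>k<K. in_L2xv (\<sigma> k)"
  shows "in_L2xv (\<lambda>z. \<Sum>k<K. c k * \<sigma> k z)"
  using assms
proof (induction K)
  case 0
  then show ?case by (simp add: L2_zero)
next
  case (Suc K)
  then show ?case by (simp add: L2_add L2_scale)
qed

definition ip :: "((real^'d) \<times> (real^'d) \<Rightarrow> real) \<Rightarrow> ((real^'d) \<times> (real^'d) \<Rightarrow> real) \<Rightarrow> real" where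
  "ip f g = (LINT z:phase_dom|lborel. f z * g z)"

lemma expand:
  assumes u: "in_L2xv u" and s: "\<forall>k<K. in_L2xv (\<sigma> k)"
  shows "(LINT z:phase_dom|lborel. (u z + (\<Sum>k<K. d k * \<sigma> k z))\<^sup>2)
    = (LINT z:phase_dom|lborel. (u z)\<^sup>2) + 2 * (\<Sum>k<K. d k * ip u (\<sigma> k))
      + (\<Sum>k<K. \<Sum>j<K. d k * d j * ip (\<sigma> k) (\<sigma> j))"
proof -
  let ?I = "indicator phase_dom :: _ \<Rightarrow> real"
  have pt: "?I z *\<^sub>R (u z + (\<Sum>k<K. d k * \<sigma> k z))\<^sup>2
     = ?I z * (u z)\<^sup>2 + 2 * (\<Sum>k<K. d k * (?I z * (u z * \<sigma> k z)))
       + (\<Sum>k<K. \<Sum>j<K. d k * d j * (?I z * (\<sigma> k z * \<sigma> j z)))" for z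
  proof -
    have "(u z + (\<Sum>k<K. d k * \<sigma> k z))\<^sup>2 = (u z)\<^sup>2 + 2 * (\<Sum>k<K. d k * (u z * \<sigma> k z))
       + (\<Sum>k<K. \<Sum>j<K. d k * d j * (\<sigma> k z * \<sigma> j z))"
      by (simp add: power2_sum power2_eq_square sum_product sum_distrib_left algebra_simps)
    then show ?thesis
      by (simp add: distrib_left sum_distrib_left algebra_simps)
  qed
  have i1: "integrable lborel (\<lambda>z. ?I z * (u z)\<^sup>2)" by (rule L2_int[OF u])
  have i2: "integrable lborel (\<lambda>z. ?I z * (u z * \<sigma> k z))" if "k < K" for k
    using L2_prod[OF u] s that by simp
  have i3: "integrable lborel (\<lambda>z. ?I z * (\<sigma> k z * \<sigma> j z))" if "k < K" "j < K" for k j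
    using L2_prod[of "\<sigma> k" "\<sigma> j"] s that by simp
  have "(LINT z:phase_dom|lborel. (u z + (\<Sum>k<K. d k * \<sigma> k z))\<^sup>2)
     = (\<integral>z. ?I z * (u z)\<^sup>2 + 2 * (\<Sum>k<K. d k * (?I z * (u z * \<sigma> k z)))
       + (\<Sum>k<K. \<Sum>j<K. d k * d j * (?I z * (\<sigma> k z * \<sigma> j z))) \<partial>lborel)"
    unfolding set_lebesgue_integral_def pt ..
  also have "\<dots> = (\<integral>z. ?I z * (u z)\<^sup>2 \<partial>lborel) + 2 * (\<Sum>k<K. d k * (\<integral>z. ?I z * (u z * \<sigma> k z) \<partial>lborel))
       + (\<Sum>k<K. \<Sum>j<K. d k * d j * (\<integral>z. ?I z * (\<sigma> k z * \<sigma> j z) \<partial>lborel))"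
  proof -
    have I2: "integrable lborel (\<lambda>z. 2 * (\<Sum>k<K. d k * (?I z * (u z * \<sigma> k z))))"
      using i2 by (intro integrable_mult_right Bochner_Integration.integrable_sum) auto
    have I3: "integrable lborel (\<lambda>z. \<Sum>k<K. \<Sum>j<K. d k * d j * (?I z * (\<sigma> k z * \<sigma> j z)))"
    proof (rule Bochner_Integration.integrable_sum)
      fix k assume k: "k \<in> {..<K}"
      show "integrable lborel (\<lambda>z. \<Sum>j<K. d k * d j * (?I z * (\<sigma> k z * \<sigma> j z)))"
      proof (rule Bochner_Integration.integrable_sum)
        fix j assume j: "j \<in> {..<K}"
        show "integrable lborel (\<lambda>z. d k * d j * (?I z * (\<sigma> k z * \<sigma> j z)))"
          using i3 k j by (intro integrable_mult_right) auto
      qed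
    qed
    have e2: "(\<integral>z. 2 * (\<Sum>k<K. d k * (?I z * (u z * \<sigma> k z))) \<partial>lborel)
        = 2 * (\<Sum>k<K. d k * (\<integral>z. ?I z * (u z * \<sigma> k z) \<partial>lborel))"
      using i2 by (simp add: integral_sum integrable_mult_right)
    have e3: "(\<integral>z. (\<Sum>k<K. \<Sum>j<K. d k * d j * (?I z * (\<sigma> k z * \<sigma> j z))) \<partial>lborel)
        = (\<Sum>k<K. \<Sum>j<K. d k * d j * (\<integral>z. ?I z * (\<sigma> k z * \<sigma> j z) \<partial>lborel))"
    proof -
      have "(\<integral>z. (\<Sum>k<K. \<Sum>j<K. d k * d j * (?I z * (\<sigma> k z * \<sigma> j z))) \<partial>lborel)
          = (\<Sum>k<K. \<integral>z. (\<Sum>j<K. d k * d j * (?I z * (\<sigma> k z * \<sigma> j z))) \<partial>lborel)"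
        by (rule Bochner_Integration.integral_sum) (use i3 in \<open>auto intro!: Bochner_Integration.integrable_sum\<close>)
      also have "\<dots> = (\<Sum>k<K. \<Sum>j<K. \<integral>z. d k * d j * (?I z * (\<sigma> k z * \<sigma> j z)) \<partial>lborel)"
        by (rule sum.cong[OF refl], rule Bochner_Integration.integral_sum) (use i3 in auto)
      finally show ?thesis by simp
    qed
    show ?thesis
      using i1 I2 I3 e2 e3 by (simp add: Bochner_Integration.integrable_add)
  qed
  finally show ?thesis
    by (simp add: ip_def set_lebesgue_integral_def)
qed

lemma (in prob_space) normal_facts:
  fixes X :: "'a \<Rightarrow> real"
  assumes h: "0 < h" and D: "distributed M lborel X (normal_density 0 (sqrt h))"
  shows "integrable M X" "expectation X = 0"
    "integrable M (\<lambda>\<omega>. (X \<omega>)\<^sup>2)" "expectation (\<lambda>\<omega>. (X \<omega>)\<^sup>2) = h"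
proof -
  have sh: "0 < sqrt h" using h by simp
  show iX: "integrable M X"
    by (rule distributed_integrable_var[OF D]) (auto intro: integrable_normal_moment_nz_1[OF sh])
  show eX: "expectation X = 0"
    by (rule normal_distributed_expectation[OF sh D])
  have "integrable lborel (\<lambda>x. normal_density 0 (sqrt h) x * (x - 0)^2)"
    by (rule integrable_normal_moment[OF sh])
  then show "integrable M (\<lambda>\<omega>. (X \<omega>)\<^sup>2)"
    using distributed_integrable[OF D, of "\<lambda>x. x^2"] by simp
  have "variance X = (sqrt h)\<^sup>2"
    by (rule normal_distributed_variance[OF sh D])
  then show "expectation (\<lambda>\<omega>. (X \<omega>)\<^sup>2) = h"
    using eX h by simp
qed

lemma (in prob_space) indep_pair_from_sets:
  fixes X Y :: "'a \<Rightarrow> real"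
  assumes ind: "indep_sets G I" and ij: "i \<in> I" "j \<in> I" "i \<noteq> j"
    and Xm: "X \<in> borel_measurable M" and Ym: "Y \<in> borel_measurable M"
    and XG: "\<forall>A\<in>sets borel. X -` A \<inter> space M \<in> G i"
    and YG: "\<forall>A\<in>sets borel. Y -` A \<inter> space M \<in> G j"
    and iX: "integrable M X" and iY: "integrable M Y"
  shows "integrable M (\<lambda>\<omega>. X \<omega> * Y \<omega>)"
    and "(\<integral>\<omega>. X \<omega> * Y \<omega> \<partial>M) = expectation X * expectation Y"
proof -
  define Z where "Z = (\<lambda>l. if l = i then X else Y)"
  have iv: "indep_vars (\<lambda>_. borel) Z {i, j}"
    unfolding indep_vars_def2
  proof
    show "\<forall>l\<in>{i, j}. random_variable borel (Z l)"
      using Xm Ym by (auto simp: Z_def)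
    show "indep_sets (\<lambda>l. {Z l -` A \<inter> space M |A. A \<in> sets borel}) {i, j}"
    proof (rule indep_sets_mono[OF ind])
      show "{i, j} \<subseteq> I" using ij by auto
      fix l assume "l \<in> {i, j}"
      then show "{Z l -` A \<inter> space M |A. A \<in> sets borel} \<subseteq> G l"
        using XG YG ij(3) by (auto simp: Z_def)
    qed
  qed
  have fin: "finite {i, j}" by simp
  have iZ: "\<And>l. l \<in> {i, j} \<Longrightarrow> integrable M (Z l)" using iX iY by (auto simp: Z_def)
  have pr: "(\<Prod>l\<in>{i, j}. Z l \<omega>) = X \<omega> * Y \<omega>" for \<omega>
    using ij(3) by (simp add: Z_def)
  have pr2: "(\<Prod>l\<in>{i, j}. expectation (Z l)) = expectation X * expectation Y"
    using ij(3) by (simp add: Z_def)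
  show "integrable M (\<lambda>\<omega>. X \<omega> * Y \<omega>)"
    using indep_vars_integrable[OF fin iv iZ] by (simp add: pr)
  show "(\<integral>\<omega>. X \<omega> * Y \<omega> \<partial>M) = expectation X * expectation Y"
    using indep_vars_lebesgue_integral[OF fin iv iZ] by (simp add: pr pr2)
qed

lemma E_meas:
  fixes E :: "real^'d \<Rightarrow> real^'d"
  assumes "\<forall>i. smooth_fun (\<lambda>x. E x $ i)"
  shows "E \<in> borel_measurable borel"
proof -
  have "continuous_on UNIV (\<lambda>x. E x $ i)" for i
  proof -
    have "\<forall>x. (\<lambda>x. E x $ i) differentiable (at x)"
      using assms unfolding smooth_fun_def by (metis iter_deriv.simps(1))
    then show ?thesis
      by (intro differentiable_imp_continuous_on) (simp add: differentiable_on_def differentiable_at_withinI)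
  qed
  then have "continuous_on UNIV (\<lambda>x. \<chi> i. E x $ i)"
    by (intro continuous_on_vec_lambda)
  then have "continuous_on UNIV E" by simp
  then show ?thesis by (rule borel_measurable_continuous_onI)
qed

lemma f_add_Suc_eq:
  "f_add E \<sigma> K \<beta> \<tau> f0 (Suc n) \<omega> z = f_add E \<sigma> K \<beta> \<tau> f0 n \<omega> (Phi E \<tau> z)
     + (\<Sum>k<K. (\<beta> k (real (Suc n) * \<tau>) \<omega> - \<beta> k (real n * \<tau>) \<omega>) * \<sigma> k z)"
  by (simp add: T_eq del: of_nat_Suc)

lemma meas_X:
  fixes N :: "'w measure" and E :: "real^'d \<Rightarrow> real^'d"
  assumes Em[measurable]: "E \<in> borel_measurable borel"
    and \<sigma>m: "\<forall>k<K. \<sigma> k \<in> borel_measurable borel"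
    and f0m[measurable]: "f0 \<in> borel_measurable borel"
    and \<beta>m: "\<forall>k<K. \<forall>j\<le>n. \<beta> k (real j * \<tau>) \<in> borel_measurable N"
  shows "(\<lambda>p. f_add E \<sigma> K \<beta> \<tau> f0 n (fst p) (snd p)) \<in> borel_measurable (N \<Otimes>\<^sub>M lborel)"
  using \<beta>m
proof (induction n)
  case 0
  then show ?case by simp
next
  case (Suc n)
  have IH[measurable]: "(\<lambda>p. f_add E \<sigma> K \<beta> \<tau> f0 n (fst p) (snd p)) \<in> borel_measurable (N \<Otimes>\<^sub>M lborel)"
    using Suc by auto
  have pm: "(\<lambda>p. (fst p, Phi E \<tau> (snd p))) \<in> (N \<Otimes>\<^sub>M lborel) \<rightarrow>\<^sub>M (N \<Otimes>\<^sub>M lborel)"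
    by measurable
  have t1: "(\<lambda>p. f_add E \<sigma> K \<beta> \<tau> f0 n (fst p) (Phi E \<tau> (snd p))) \<in> borel_measurable (N \<Otimes>\<^sub>M lborel)"
    using measurable_compose[OF pm IH] by (simp add: comp_def)
  have t2: "(\<lambda>p. \<Sum>k<K. (\<beta> k (real (Suc n) * \<tau>) (fst p) - \<beta> k (real n * \<tau>) (fst p)) * \<sigma> k (snd p))
      \<in> borel_measurable (N \<Otimes>\<^sub>M lborel)"
  proof (rule borel_measurable_sum)
    fix k assume "k \<in> {..<K}"
    then have [measurable]: "\<beta> k (real (Suc n) * \<tau>) \<in> borel_measurable N" "\<beta> k (real n * \<tau>) \<in> borel_measurable N"
      "\<sigma> k \<in> borel_measurable borel"
      using Suc.prems \<sigma>m by (auto simp del: of_nat_Suc)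
    show "(\<lambda>p. (\<beta> k (real (Suc n) * \<tau>) (fst p) - \<beta> k (real n * \<tau>) (fst p)) * \<sigma> k (snd p)) \<in> borel_measurable (N \<Otimes>\<^sub>M lborel)"
      by measurable
  qed
  show ?case
    unfolding f_add_Suc_eq using t1 t2 by (rule borel_measurable_add)
qed

definition N2 :: "((real^'d) \<times> (real^'d) \<Rightarrow> real) \<Rightarrow> real" where
  "N2 f = (LINT z:phase_dom|lborel. (f z)\<^sup>2)"

lemma N2_nonneg: "0 \<le> N2 f"
  unfolding N2_def set_lebesgue_integral_def by (rule Bochner_Integration.integral_nonneg) (auto simp: indicator_def)

lemma L2xv_norm_sq: "(L2xv_norm f)\<^sup>2 = N2 f"
  unfolding L2xv_norm_def N2_def[symmetric] using N2_nonneg by simp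

lemma ip_self: "ip f f = N2 f"
  by (simp add: ip_def N2_def power2_eq_square)

lemma ip_bound:
  assumes f: "in_L2xv f" and g: "in_L2xv g"
  shows "\<bar>ip f g\<bar> \<le> N2 f + N2 g"
proof -
  have "norm (\<integral>z. indicator phase_dom z * (f z * g z) \<partial>lborel)
     \<le> (\<integral>z. indicator phase_dom z * (f z)\<^sup>2 + indicator phase_dom z * (g z)\<^sup>2 \<partial>lborel)"
  proof (rule Bochner_Integration.integral_norm_bound_integral)
    show "integrable lborel (\<lambda>z. indicator phase_dom z * (f z * g z))" by (rule L2_prod[OF f g])
    show "integrable lborel (\<lambda>z. indicator phase_dom z * (f z)\<^sup>2 + indicator phase_dom z * (g z)\<^sup>2)"
      using L2_int[OF f] L2_int[OF g] by simp
    fix z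
    show "norm (indicator phase_dom z * (f z * g z)) \<le> indicator phase_dom z * (f z)\<^sup>2 + indicator phase_dom z * (g z)\<^sup>2"
      using abs_prod_le[of "f z" "g z"] by (simp add: indicator_def)
  qed
  also have "\<dots> = N2 f + N2 g"
    unfolding N2_def set_lebesgue_integral_def using L2_int[OF f] L2_int[OF g] by simp
  finally show ?thesis by (simp add: ip_def set_lebesgue_integral_def)
qed

lemma meas_N2:
  fixes G :: "'w \<Rightarrow> (real^'d) \<times> (real^'d) \<Rightarrow> real"
  assumes [measurable]: "(\<lambda>p. G (fst p) (snd p)) \<in> borel_measurable (N \<Otimes>\<^sub>M lborel)"
  shows "(\<lambda>\<omega>. N2 (G \<omega>)) \<in> borel_measurable N"
proof -
  have "(\<lambda>(\<omega>, z). indicator phase_dom z *\<^sub>R (G \<omega> z)\<^sup>2) \<in> borel_measurable (N \<Otimes>\<^sub>M lborel)"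
    unfolding case_prod_unfold by measurable
  then show ?thesis
    unfolding N2_def set_lebesgue_integral_def
    by (rule lborel.borel_measurable_lebesgue_integral)
qed

lemma meas_ip:
  fixes G :: "'w \<Rightarrow> (real^'d) \<times> (real^'d) \<Rightarrow> real" and E :: "real^'d \<Rightarrow> real^'d"
  assumes [measurable]: "(\<lambda>p. G (fst p) (snd p)) \<in> borel_measurable (N \<Otimes>\<^sub>M lborel)"
    and [measurable]: "s \<in> borel_measurable borel" "E \<in> borel_measurable borel"
  shows "(\<lambda>\<omega>. ip (\<lambda>z. G \<omega> (Phi E t z)) s) \<in> borel_measurable N"
proof -
  have pm: "(\<lambda>p. (fst p, Phi E t (snd p))) \<in> (N \<Otimes>\<^sub>M lborel) \<rightarrow>\<^sub>M (N \<Otimes>\<^sub>M lborel)"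
    by measurable
  have [measurable]: "(\<lambda>p. G (fst p) (Phi E t (snd p))) \<in> borel_measurable (N \<Otimes>\<^sub>M lborel)"
    using measurable_compose[OF pm, of "\<lambda>p. G (fst p) (snd p)"] by (simp add: comp_def)
  have "(\<lambda>(\<omega>, z). indicator phase_dom z *\<^sub>R (G \<omega> (Phi E t z) * s z)) \<in> borel_measurable (N \<Otimes>\<^sub>M lborel)"
    unfolding case_prod_unfold by measurable
  then show ?thesis
    unfolding ip_def set_lebesgue_integral_def
    by (rule lborel.borel_measurable_lebesgue_integral)
qed

theorem proposition4p2:
  fixes M :: "'w measure" and F :: "real \<Rightarrow> 'w set set" and K :: nat
    and \<beta> :: "nat \<Rightarrow> real \<Rightarrow> 'w \<Rightarrow> real"
    and E :: "real^'d \<Rightarrow> real^'d"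
    and \<sigma> :: "nat \<Rightarrow> (real^'d) \<times> (real^'d) \<Rightarrow> real"
    and f0 :: "(real^'d) \<times> (real^'d) \<Rightarrow> real" and \<tau> :: real and n :: nat
  assumes W: "wiener_family M F K \<beta>"
    and E_per: "periodic_on_torus E"
    and E_smooth: "\<forall>i. smooth_fun (\<lambda>x. E x $ i)"
    and \<sigma>_per: "\<forall>k<K. x_periodic (\<sigma> k)"
    and \<sigma>_smooth: "\<forall>k<K. smooth_fun (\<sigma> k)"
    and \<sigma>_L2: "\<forall>k<K. in_L2xv (\<sigma> k)"
    and f0_L2: "in_L2xv f0"
    and \<tau>: "0 < \<tau>" "\<tau> < 1"
  shows "(\<lambda>(\<omega>, z). f_add E \<sigma> K \<beta> \<tau> f0 n \<omega> z) \<in> borel_measurable (M \<Otimes>\<^sub>M lborel)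
    \<and> (\<forall>\<omega>\<in>space M. in_L2xv (f_add E \<sigma> K \<beta> \<tau> f0 n \<omega>))
    \<and> integrable M (\<lambda>\<omega>. (L2xv_norm (f_add E \<sigma> K \<beta> \<tau> f0 n \<omega>))\<^sup>2)
    \<and> (\<integral>\<omega>. (L2xv_norm (f_add E \<sigma> K \<beta> \<tau> f0 n \<omega>))\<^sup>2 \<partial>M)
        = (L2xv_norm f0)\<^sup>2 + (real n * \<tau>) * (\<Sum>k<K. (L2xv_norm (\<sigma> k))\<^sup>2)"
proof -
  have W1: "prob_space M" using W by (simp add: wiener_family_def)
  have W2: "\<And>t. F t \<subseteq> sets M" "\<And>t. sigma_algebra (space M) (F t)" using W by (simp_all add: wiener_family_def)
  have W3: "\<And>s t. s \<le> t \<Longrightarrow> F s \<subseteq> F t" using W by (simp add: wiener_family_def)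
  have W4: "\<And>k t A. k < K \<Longrightarrow> 0 \<le> t \<Longrightarrow> A \<in> sets borel \<Longrightarrow> \<beta> k t -` A \<inter> space M \<in> F t"
    using W by (simp add: wiener_family_def)
  have W7: "\<And>k s t. k < K \<Longrightarrow> 0 \<le> s \<Longrightarrow> s < t \<Longrightarrow>
        distributed M lborel (\<lambda>\<omega>. \<beta> k t \<omega> - \<beta> k s \<omega>) (normal_density 0 (sqrt (t - s)))"
    using W by (simp add: wiener_family_def)
  have W8: "\<And>s t. 0 \<le> s \<Longrightarrow> s < t \<Longrightarrow> prob_space.indep_sets M
          (\<lambda>i. case i of None \<Rightarrow> F s
                | Some k \<Rightarrow> {(\<lambda>\<omega>. \<beta> k t \<omega> - \<beta> k s \<omega>) -` A \<inter> space M | A. A \<in> sets borel})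
          (insert None (Some ` {..<K}))"
    using W by (simp add: wiener_family_def)
  interpret P: prob_space M by (rule W1)
  have Em[measurable]: "E \<in> borel_measurable borel" by (rule E_meas[OF E_smooth])
  have \<sigma>m: "\<forall>k<K. \<sigma> k \<in> borel_measurable borel" using \<sigma>_L2 by (simp add: in_L2xv_def)
  have f0m: "f0 \<in> borel_measurable borel" using f0_L2 by (simp add: in_L2xv_def)
  define Ft where "Ft t = measure_of (space M) (F t) (\<lambda>_. 0)" for t
  have Ft_sets: "sets (Ft t) = F t" for t
    unfolding Ft_def by (rule sigma_algebra.sets_measure_of_eq[OF W2(2)])
  have Ft_space: "space (Ft t) = space M" for t
    unfolding Ft_def by (rule sigma_algebra.space_measure_of_eq[OF W2(2)])
  have \<beta>F: "\<beta> k r \<in> borel_measurable (Ft t)" if "k < K" "0 \<le> r" "r \<le> t" for k r t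
  proof (rule measurableI)
    fix A :: "real set" assume "A \<in> sets borel"
    then have "\<beta> k r -` A \<inter> space M \<in> F t" using W4[OF that(1,2)] W3[OF that(3)] by blast
    then show "\<beta> k r -` A \<inter> space (Ft t) \<in> sets (Ft t)" by (simp add: Ft_sets Ft_space)
  qed simp
  have \<beta>M: "\<beta> k r \<in> borel_measurable M" if "k < K" "0 \<le> r" for k r
  proof (rule measurableI)
    fix A :: "real set" assume "A \<in> sets borel"
    then show "\<beta> k r -` A \<inter> space M \<in> sets M" using W4[OF that] W2(1) by blast
  qed simp
  define X where "X = f_add E \<sigma> K \<beta> \<tau> f0"
  have XM: "(\<lambda>p. X m (fst p) (snd p)) \<in> borel_measurable (M \<Otimes>\<^sub>M lborel)" for m
    unfolding X_def by (rule meas_X[OF Em \<sigma>m f0m]) (use \<beta>M \<tau> in auto)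
  have XF: "(\<lambda>p. X m (fst p) (snd p)) \<in> borel_measurable (Ft (real m * \<tau>) \<Otimes>\<^sub>M lborel)" for m
    unfolding X_def
  proof (rule meas_X[OF Em \<sigma>m f0m], intro allI impI)
    fix k j assume "k < K" "j \<le> m"
    then show "\<beta> k (real j * \<tau>) \<in> borel_measurable (Ft (real m * \<tau>))"
      using \<tau> by (intro \<beta>F) (auto intro: mult_right_mono)
  qed
  have main: "(\<forall>\<omega>\<in>space M. in_L2xv (X m \<omega>)) \<and> integrable M (\<lambda>\<omega>. N2 (X m \<omega>))
     \<and> (\<integral>\<omega>. N2 (X m \<omega>) \<partial>M) = N2 f0 + real m * \<tau> * (\<Sum>k<K. N2 (\<sigma> k))" for m
  proof (induction m)
    case 0
    then show ?case using f0_L2 by (simp add: X_def P.prob_space)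
  next
    case (Suc n)
    have L2n: "\<And>\<omega>. \<omega> \<in> space M \<Longrightarrow> in_L2xv (X n \<omega>)" using Suc.IH by blast
    have intn: "integrable M (\<lambda>\<omega>. N2 (X n \<omega>))" using Suc.IH by blast
    have en: "(\<integral>\<omega>. N2 (X n \<omega>) \<partial>M) = N2 f0 + real n * \<tau> * (\<Sum>k<K. N2 (\<sigma> k))" using Suc.IH by blast
    define s where "s = real n * \<tau>"
    define t where "t = real (Suc n) * \<tau>"
    have st: "0 \<le> s" "s < t" "t - s = \<tau>" using \<tau> by (auto simp: s_def t_def algebra_simps)
    define \<delta> where "\<delta> k \<omega> = \<beta> k t \<omega> - \<beta> k s \<omega>" for k \<omega>
    define u where "u \<omega> = (\<lambda>z. X n \<omega> (Phi E \<tau> z))" for \<omega>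
    define Y where "Y k \<omega> = ip (u \<omega>) (\<sigma> k)" for k \<omega>
    have uT: "u \<omega> = S2 E \<tau> (S1 \<tau> (X n \<omega>))" for \<omega>
      unfolding u_def by (rule ext) (simp add: T_eq)
    have L2u: "in_L2xv (u \<omega>)" "N2 (u \<omega>) = N2 (X n \<omega>)" if "\<omega> \<in> space M" for \<omega>
      using L2_T[OF L2n[OF that] E_per Em, of \<tau>] unfolding uT[symmetric] N2_def by auto
    have Xs: "X (Suc n) \<omega> = (\<lambda>z. u \<omega> z + (\<Sum>k<K. \<delta> k \<omega> * \<sigma> k z))" for \<omega>
      unfolding X_def u_def \<delta>_def s_def t_def by (rule ext) (rule f_add_Suc_eq)
    have L2s: "\<forall>\<omega>\<in>space M. in_L2xv (X (Suc n) \<omega>)"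
      unfolding Xs using L2u(1) L2_sum[OF \<sigma>_L2] by (auto intro: L2_add)
    have expd: "N2 (X (Suc n) \<omega>) = N2 (X n \<omega>) + 2 * (\<Sum>k<K. \<delta> k \<omega> * Y k \<omega>)
        + (\<Sum>k<K. \<Sum>j<K. \<delta> k \<omega> * \<delta> j \<omega> * ip (\<sigma> k) (\<sigma> j))" if "\<omega> \<in> space M" for \<omega>
      using expand[OF L2u(1)[OF that] \<sigma>_L2, of "\<lambda>k. \<delta> k \<omega>"] L2u(2)[OF that]
      unfolding Xs N2_def Y_def by simp
    have \<delta>M: "\<delta> k \<in> borel_measurable M" if "k < K" for k
      unfolding \<delta>_def using \<beta>M[OF that] st by (intro borel_measurable_diff) auto
    have YM: "Y k \<in> borel_measurable M" if "k < K" for k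
      unfolding Y_def u_def using meas_ip[OF XM[of n], of "\<sigma> k" E \<tau>] \<sigma>m that by auto
    have YF: "Y k \<in> borel_measurable (Ft s)" if "k < K" for k
      unfolding Y_def u_def s_def using meas_ip[OF XF[of n], of "\<sigma> k" E \<tau>] \<sigma>m that by auto
    have D: "distributed M lborel (\<delta> k) (normal_density 0 (sqrt \<tau>))" if "k < K" for k
      using W7[OF that st(1,2)] unfolding st(3) \<delta>_def by simp
    note nf = P.normal_facts[OF \<tau>(1) D]
    have IS: "P.indep_sets (\<lambda>i. case i of None \<Rightarrow> F s
                | Some k \<Rightarrow> {(\<lambda>\<omega>. \<beta> k t \<omega> - \<beta> k s \<omega>) -` A \<inter> space M | A. A \<in> sets borel})
          (insert None (Some ` {..<K}))"
      by (rule W8[OF st(1,2)])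
    have \<delta>G: "\<forall>A\<in>sets borel. \<delta> k -` A \<inter> space M \<in> {(\<lambda>\<omega>. \<beta> k t \<omega> - \<beta> k s \<omega>) -` A \<inter> space M | A. A \<in> sets borel}" for k
      unfolding \<delta>_def by blast
    have iY: "integrable M (Y k)" if k: "k < K" for k
    proof (rule Bochner_Integration.integrable_bound)
      show "integrable M (\<lambda>\<omega>. N2 (X n \<omega>) + N2 (\<sigma> k))" using intn by simp
      show "Y k \<in> borel_measurable M" by (rule YM[OF k])
      show "AE \<omega> in M. norm (Y k \<omega>) \<le> norm (N2 (X n \<omega>) + N2 (\<sigma> k))"
      proof (rule AE_I2)
        fix \<omega> assume \<omega>: "\<omega> \<in> space M"
        have "\<bar>Y k \<omega>\<bar> \<le> N2 (u \<omega>) + N2 (\<sigma> k)"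
          unfolding Y_def using ip_bound[OF L2u(1)[OF \<omega>]] \<sigma>_L2 k by auto
        then show "norm (Y k \<omega>) \<le> norm (N2 (X n \<omega>) + N2 (\<sigma> k))"
          using L2u(2)[OF \<omega>] N2_nonneg[of "X n \<omega>"] N2_nonneg[of "\<sigma> k"] by simp
      qed
    qed
    have A2: "integrable M (\<lambda>\<omega>. \<delta> k \<omega> * Y k \<omega>) \<and> (\<integral>\<omega>. \<delta> k \<omega> * Y k \<omega> \<partial>M) = 0" if k: "k < K" for k
    proof -
      have YG: "\<forall>A\<in>sets borel. Y k -` A \<inter> space M \<in> F s"
        using measurable_sets[OF YF[OF k]] by (simp add: Ft_sets Ft_space)
      have "integrable M (\<lambda>\<omega>. Y k \<omega> * \<delta> k \<omega>)" "(\<integral>\<omega>. Y k \<omega> * \<delta> k \<omega> \<partial>M) = P.expectation (Y k) * P.expectation (\<delta> k)"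
        using P.indep_pair_from_sets[OF IS, of None "Some k", OF _ _ _ YM[OF k] \<delta>M[OF k] _ _ iY[OF k] nf(1)[OF k]]
          YG \<delta>G[of k] k by auto
      then show ?thesis using nf(2)[OF k] by (simp add: mult.commute)
    qed
    have A3: "integrable M (\<lambda>\<omega>. \<delta> k \<omega> * \<delta> j \<omega>) \<and> (\<integral>\<omega>. \<delta> k \<omega> * \<delta> j \<omega> \<partial>M) = (if k = j then \<tau> else 0)"
      if k: "k < K" and j: "j < K" for k j
    proof (cases "k = j")
      case True
      then show ?thesis using nf(3)[OF k] nf(4)[OF k] by (simp add: power2_eq_square)
    next
      case False
      have "integrable M (\<lambda>\<omega>. \<delta> k \<omega> * \<delta> j \<omega>)" "(\<integral>\<omega>. \<delta> k \<omega> * \<delta> j \<omega> \<partial>M) = P.expectation (\<delta> k) * P.expectation (\<delta> j)"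
        using P.indep_pair_from_sets[OF IS, of "Some k" "Some j", OF _ _ _ \<delta>M[OF k] \<delta>M[OF j] _ _ nf(1)[OF k] nf(1)[OF j]]
          \<delta>G[of k] \<delta>G[of j] k j False by auto
      then show ?thesis using nf(2)[OF k] False by simp
    qed
    define c where "c k j = ip (\<sigma> k) (\<sigma> j)" for k j
    have I2: "integrable M (\<lambda>\<omega>. 2 * (\<Sum>k<K. \<delta> k \<omega> * Y k \<omega>))"
      using A2 by (intro integrable_mult_right Bochner_Integration.integrable_sum) auto
    have e2: "(\<integral>\<omega>. 2 * (\<Sum>k<K. \<delta> k \<omega> * Y k \<omega>) \<partial>M) = 0"
    proof -
      have "(\<integral>\<omega>. (\<Sum>k<K. \<delta> k \<omega> * Y k \<omega>) \<partial>M) = (\<Sum>k<K. \<integral>\<omega>. \<delta> k \<omega> * Y k \<omega> \<partial>M)"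
        by (rule Bochner_Integration.integral_sum) (use A2 in auto)
      also have "\<dots> = 0" using A2 by simp
      finally show ?thesis by simp
    qed
    have I3: "integrable M (\<lambda>\<omega>. \<Sum>k<K. \<Sum>j<K. \<delta> k \<omega> * \<delta> j \<omega> * c k j)"
    proof (rule Bochner_Integration.integrable_sum)
      fix k assume k: "k \<in> {..<K}"
      show "integrable M (\<lambda>\<omega>. \<Sum>j<K. \<delta> k \<omega> * \<delta> j \<omega> * c k j)"
      proof (rule Bochner_Integration.integrable_sum)
        fix j assume j: "j \<in> {..<K}"
        show "integrable M (\<lambda>\<omega>. \<delta> k \<omega> * \<delta> j \<omega> * c k j)"
          using A3 k j by (intro integrable_mult_left) auto
      qed
    qed
    have e3: "(\<integral>\<omega>. (\<Sum>k<K. \<Sum>j<K. \<delta> k \<omega> * \<delta> j \<omega> * c k j) \<partial>M) = \<tau> * (\<Sum>k<K. N2 (\<sigma> k))"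
    proof -
      have "(\<integral>\<omega>. (\<Sum>k<K. \<Sum>j<K. \<delta> k \<omega> * \<delta> j \<omega> * c k j) \<partial>M)
          = (\<Sum>k<K. \<integral>\<omega>. (\<Sum>j<K. \<delta> k \<omega> * \<delta> j \<omega> * c k j) \<partial>M)"
        by (rule Bochner_Integration.integral_sum) (use A3 in \<open>auto intro!: Bochner_Integration.integrable_sum\<close>)
      also have "\<dots> = (\<Sum>k<K. \<Sum>j<K. \<integral>\<omega>. \<delta> k \<omega> * \<delta> j \<omega> * c k j \<partial>M)"
        by (rule sum.cong[OF refl], rule Bochner_Integration.integral_sum) (use A3 in auto)
      also have "\<dots> = (\<Sum>k<K. \<Sum>j<K. (if k = j then \<tau> * c k j else 0))"
        by (rule sum.cong[OF refl], rule sum.cong[OF refl]) (use A3 in auto)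
      also have "\<dots> = (\<Sum>k<K. \<tau> * N2 (\<sigma> k))"
        by (rule sum.cong[OF refl]) (simp add: c_def ip_self)
      finally show ?thesis by (simp add: sum_distrib_left)
    qed
    have eqS: "N2 (X (Suc n) \<omega>) = N2 (X n \<omega>) + 2 * (\<Sum>k<K. \<delta> k \<omega> * Y k \<omega>)
        + (\<Sum>k<K. \<Sum>j<K. \<delta> k \<omega> * \<delta> j \<omega> * c k j)" if "\<omega> \<in> space M" for \<omega>
      using expd[OF that] by (simp add: c_def)
    have intS: "integrable M (\<lambda>\<omega>. N2 (X (Suc n) \<omega>))"
    proof -
      have "integrable M (\<lambda>\<omega>. N2 (X n \<omega>) + 2 * (\<Sum>k<K. \<delta> k \<omega> * Y k \<omega>)
        + (\<Sum>k<K. \<Sum>j<K. \<delta> k \<omega> * \<delta> j \<omega> * c k j))"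
        using intn I2 I3 by (intro Bochner_Integration.integrable_add)
      moreover have "integrable M (\<lambda>\<omega>. N2 (X (Suc n) \<omega>)) \<longleftrightarrow> integrable M (\<lambda>\<omega>. N2 (X n \<omega>) + 2 * (\<Sum>k<K. \<delta> k \<omega> * Y k \<omega>)
        + (\<Sum>k<K. \<Sum>j<K. \<delta> k \<omega> * \<delta> j \<omega> * c k j))"
        by (rule Bochner_Integration.integrable_cong[OF refl]) (rule eqS)
      ultimately show ?thesis by simp
    qed
    have "(\<integral>\<omega>. N2 (X (Suc n) \<omega>) \<partial>M) = (\<integral>\<omega>. N2 (X n \<omega>) + 2 * (\<Sum>k<K. \<delta> k \<omega> * Y k \<omega>)
        + (\<Sum>k<K. \<Sum>j<K. \<delta> k \<omega> * \<delta> j \<omega> * c k j) \<partial>M)"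
      by (rule Bochner_Integration.integral_cong[OF refl eqS])
    also have "\<dots> = (\<integral>\<omega>. N2 (X n \<omega>) \<partial>M) + (\<integral>\<omega>. 2 * (\<Sum>k<K. \<delta> k \<omega> * Y k \<omega>) \<partial>M)
        + (\<integral>\<omega>. (\<Sum>k<K. \<Sum>j<K. \<delta> k \<omega> * \<delta> j \<omega> * c k j) \<partial>M)"
      using intn I2 I3 by simp
    also have "\<dots> = N2 f0 + real (Suc n) * \<tau> * (\<Sum>k<K. N2 (\<sigma> k))"
      unfolding en e2 e3 by (simp add: algebra_simps)
    finally show ?case using L2s intS by blast
  qed
  have Xeq: "f_add E \<sigma> K \<beta> \<tau> f0 n = X n" by (simp add: X_def)
  show ?thesis
    unfolding Xeq L2xv_norm_sq
    using main[of n] XM[of n] by (simp add: case_prod_unfold)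
qed

end
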